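(* The class of Subgraph MPNNs can count $3$-cycles, $4$-cycles, $2$-paths and $3$-paths at node level. That is, for $S$ any one of these substructures and for all node-graph pairs $(i_1,G_1),(i_2,G_2)$ with $C(S,i_1,G_1)\neq C(S,i_2,G_2)$, there exists a Subgraph MPNN whose node representations satisfy $h_{i_1}(G_1)\neq h_{i_2}(G_2)$.
   Context: Graphs are finite, simple, undirected, $G=(V,E)$, possibly carrying node attributes $x_v$ and edge attributes $e_{u,v}$ (a fixed constant when absent). $N(v)$ is the neighbour set of $v$. For $L\ge 1$, an $L$-path is a sequence of edges $(v_1,v_2),\dots,(v_L,v_{L+1})$ of $G$ with $v_1,\dots,v_{L+1}$ pairwise distinct; for $L\ge 3$, an $L$-cycle is such a sequence with $v_1,\dots,v_L$ pairwise distinct and $v_{L+1}=v_1$. Two paths (resp. cycles) are identified when their edge sets coincide. $C(L\text{-cycle},i,G)$ is the number of inequivalent $L$-cycles containing node $i$; $C(L\text{-path},i,G)$ is the number of inequivalent $L$-paths starting from $i$ (i.e. with $v_1=i$). A class $\mathcal F$ of functions on node-graph pairs can count $S$ at node level if for all $(i_1,G_1),(i_2,G_2)$ with $C(S,i_1,G_1)\ne C(S,i_2,G_2)$ there is $f\in\mathcal F$ with $f(i_1,G_1)\ne f(i_2,G_2)$. Subgraph MPNNs. A Subgraph MPNN is specified by: (1) a subgraph extraction rule, either node deletion, $(V_i,E_i)=(V\setminus\{i\},E\setminus\{(i,j):j\in N(i)\})$, or the $K$-hop ego-network for some integer $K\ge1$, i.e. $(V_i,E_i)$ is the subgraph of $G$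 induced by the nodes at shortest-path distance at most $K$ from $i$; (2) a node labeling $z_{i,j}$, which is either absent, identity labeling $z_{i,j}=\mathbb 1_{i=j}$, or shortest path distance $z_{i,j}=\mathrm{spd}(i,j)$; (3) a number of layers $T$ and arbitrary functions $M_t$ (with values in some $\mathbb R^{d_t}$) and $U_t$; (4) an arbitrary readout $R_{\text{node}}$ on finite multisets. For each root $i\in V$ and $j\in V_i$: $h^{(0)}_{i,j}=x_j\oplus z_{i,j}$, $h^{(t+1)}_{i,j}=U_t\big(h^{(t)}_{i,j},\sum_{k\in N_i(j)}M_t(h^{(t)}_{i,j},h^{(t)}_{i,k},e_{j,k})\big)$ with $N_i(j)=\{k\in V_i:(j,k)\in E_i\}$, and the node representation is $h_i=R_{\text{node}}(\{\!\{h^{(T)}_{i,j}:j\in V_i\}\!\})$. The node-level function computed is $(i,G)\mapsto h_i$; the class of Subgraph MPNNs consists of all such choices. *)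

theory Defs
  imports Main "HOL-Library.Multiset" "HOL-Library.Function_Algebras" "HOL-Library.Extended_Nat"
begin

text \<open>Node attributes and edge attributes are real vectors (lists of reals).
  A constant edge attribute models the case of absent edge attributes.\<close>

record 'v graph =
  verts :: "'v set"
  adj   :: "'v \<Rightarrow> 'v \<Rightarrow> bool"
  nattr :: "'v \<Rightarrow> real list"
  eattr :: "'v \<Rightarrow> 'v \<Rightarrow> real list"

definition wf_graph :: "('v, 'b) graph_scheme \<Rightarrow> bool" where
  "wf_graph G \<longleftrightarrow> finite (verts G)
     \<and> (\<forall>u v. adj G u v \<longrightarrow> u \<in> verts G \<and> v \<in> verts G)
     \<and> (\<forall>u v. adj G u v \<longrightarrow> adj G v u)
     \<and> (\<forall>u. \<not> adj G u u)
     \<and> (\<forall>u v. eattr G u v = eattr G v u)"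

definition neighbours :: "('v, 'b) graph_scheme \<Rightarrow> 'v \<Rightarrow> 'v set" where
  "neighbours G v = {u. adj G v u}"

definition is_path :: "('v, 'b) graph_scheme \<Rightarrow> nat \<Rightarrow> 'v list \<Rightarrow> bool" where
  "is_path G L vs \<longleftrightarrow> L \<ge> 1 \<and> length vs = L + 1 \<and> distinct vs
     \<and> (\<forall>k < L. adj G (vs ! k) (vs ! (k + 1)))"

definition path_edges :: "nat \<Rightarrow> 'v list \<Rightarrow> 'v set set" where
  "path_edges L vs = (\<lambda>k. {vs ! k, vs ! (k + 1)}) ` {..<L}"

definition is_cycle :: "('v, 'b) graph_scheme \<Rightarrow> nat \<Rightarrow> 'v list \<Rightarrow> bool" where
  "is_cycle G L vs \<longleftrightarrow> L \<ge> 3 \<and> length vs = L \<and> distinct vs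
     \<and> (\<forall>k < L. adj G (vs ! k) (vs ! ((k + 1) mod L)))"

definition cycle_edges :: "nat \<Rightarrow> 'v list \<Rightarrow> 'v set set" where
  "cycle_edges L vs = (\<lambda>k. {vs ! k, vs ! ((k + 1) mod L)}) ` {..<L}"

datatype substructure = Cycle nat | Path nat

fun count :: "substructure \<Rightarrow> ('v, 'b) graph_scheme \<Rightarrow> 'v \<Rightarrow> nat" where
  "count (Cycle L) G i = card {cycle_edges L vs | vs. is_cycle G L vs \<and> i \<in> set vs}"
| "count (Path L) G i = card {path_edges L vs | vs. is_path G L vs \<and> hd vs = i}"

definition walk :: "('v, 'b) graph_scheme \<Rightarrow> nat \<Rightarrow> 'v \<Rightarrow> 'v \<Rightarrow> bool" where
  "walk G n i j \<longleftrightarrow> (\<exists>vs. length vs = n + 1 \<and> hd vs = i \<and> last vs = j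
      \<and> set vs \<subseteq> verts G \<and> (\<forall>k < n. adj G (vs ! k) (vs ! (k + 1))))"

definition spd :: "('v, 'b) graph_scheme \<Rightarrow> 'v \<Rightarrow> 'v \<Rightarrow> enat" where
  "spd G i j = (if \<exists>n. walk G n i j then enat (LEAST n. walk G n i j) else \<infinity>)"

datatype extraction = NodeDeletion | EgoNet nat
datatype labeling = NoLabel | IdLabel | SpdLabel

text \<open>Hidden states are real vectors (lists); messages of layer t take values in
  \<open>\<real>^{d_t}\<close>, modelled as functions \<open>nat \<Rightarrow> real\<close> vanishing from index \<open>d_t\<close> on.\<close>

record mpnn =
  extr   :: extraction
  lab    :: labeling
  layers :: nat
  Msg    :: "nat \<Rightarrow> real list \<Rightarrow> real list \<Rightarrow> real list \<Rightarrow> (nat \<Rightarrow> real)"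
  Upd    :: "nat \<Rightarrow> real list \<Rightarrow> (nat \<Rightarrow> real) \<Rightarrow> real list"
  Readout :: "real list multiset \<Rightarrow> real list"

definition valid_mpnn :: "mpnn \<Rightarrow> bool" where
  "valid_mpnn N \<longleftrightarrow> (\<forall>K. extr N = EgoNet K \<longrightarrow> K \<ge> 1)
     \<and> (\<forall>t < layers N. \<exists>d. \<forall>a b c k. d \<le> k \<longrightarrow> Msg N t a b c k = 0)"

definition subV :: "extraction \<Rightarrow> ('v, 'b) graph_scheme \<Rightarrow> 'v \<Rightarrow> 'v set" where
  "subV ex G i = (case ex of
       NodeDeletion \<Rightarrow> verts G - {i}
     | EgoNet K \<Rightarrow> {j \<in> verts G. spd G i j \<le> enat K})"

definition subAdj :: "extraction \<Rightarrow> ('v, 'b) graph_scheme \<Rightarrow> 'v \<Rightarrow> 'v \<Rightarrow> 'v \<Rightarrow> bool" where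
  "subAdj ex G i j k \<longleftrightarrow> adj G j k \<and> j \<in> subV ex G i \<and> k \<in> subV ex G i"

text \<open>Node labels z_{i,j} as real vectors; an infinite distance (only possible
  under node deletion in a disconnected graph) is encoded as -1.\<close>
definition zlabel :: "labeling \<Rightarrow> ('v, 'b) graph_scheme \<Rightarrow> 'v \<Rightarrow> 'v \<Rightarrow> real list" where
  "zlabel l G i j = (case l of
       NoLabel \<Rightarrow> []
     | IdLabel \<Rightarrow> [if i = j then 1 else 0]
     | SpdLabel \<Rightarrow> [(case spd G i j of enat n \<Rightarrow> real n | \<infinity> \<Rightarrow> -1)])"

fun hidden :: "mpnn \<Rightarrow> ('v, 'b) graph_scheme \<Rightarrow> 'v \<Rightarrow> nat \<Rightarrow> 'v \<Rightarrow> real list" where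
  "hidden N G i 0 j = nattr G j @ zlabel (lab N) G i j"
| "hidden N G i (Suc t) j = Upd N t (hidden N G i t j)
      (\<Sum>k \<in> {k. subAdj (extr N) G i j k}.
          Msg N t (hidden N G i t j) (hidden N G i t k) (eattr G j k))"

definition node_rep :: "mpnn \<Rightarrow> ('v, 'b) graph_scheme \<Rightarrow> 'v \<Rightarrow> real list" where
  "node_rep N G i = Readout N (image_mset (hidden N G i (layers N)) (mset_set (subV (extr N) G i)))"

definition can_count_node_level :: "'v itself \<Rightarrow> substructure \<Rightarrow> bool" where
  "can_count_node_level _ S \<longleftrightarrow>
     (\<forall>(G1 :: 'v graph) (G2 :: 'v graph) i1 i2.
        wf_graph G1 \<longrightarrow> wf_graph G2 \<longrightarrow> i1 \<in> verts G1 \<longrightarrow> i2 \<in> verts G2 \<longrightarrow>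
        count S G1 i1 \<noteq> count S G2 i2 \<longrightarrow>
        (\<exists>N. valid_mpnn N \<and> node_rep N G1 i1 \<noteq> node_rep N G2 i2))"

end

theory Submission
  imports Defs
begin


lemma sum_fun_apply: "(\<Sum>k\<in>A. (f k :: nat \<Rightarrow> real)) n = (\<Sum>k\<in>A. f k n)"
  by (induction A rule: infinite_finite_induct) auto

lemma walk_step:
  assumes w: "walk G n i u" and a: "adj G u v" and wf: "wf_graph G"
  shows "walk G (Suc n) i v"
proof -
  obtain vs where vs: "length vs = n + 1" "hd vs = i" "last vs = u" "set vs \<subseteq> verts G"
    "\<forall>k < n. adj G (vs ! k) (vs ! (k + 1))" using w unfolding walk_def by blast
  have vv: "v \<in> verts G" using a wf unfolding wf_graph_def by blast
  have ne: "vs \<noteq> []" using vs(1) by auto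
  have lastn: "vs ! n = u" using vs(1,3) ne by (simp add: last_conv_nth)
  show ?thesis unfolding walk_def
  proof (intro exI[of _ "vs @ [v]"] conjI allI impI)
    fix k assume k: "k < Suc n"
    show "adj G ((vs @ [v]) ! k) ((vs @ [v]) ! (k + 1))"
    proof (cases "k < n")
      case True then show ?thesis using vs(1,5) by (simp add: nth_append)
    next
      case False then have "k = n" using k by simp
      then show ?thesis using vs(1) lastn a by (simp add: nth_append)
    qed
  qed (use vs ne vv in auto)
qed

lemma walk_0: "i \<in> verts G \<Longrightarrow> walk G 0 i i"
  unfolding walk_def by (intro exI[of _ "[i]"]) auto

lemma spd_le: "walk G n i j \<Longrightarrow> spd G i j \<le> enat n"
  unfolding spd_def by (auto intro: Least_le)

lemma walk_1: "wf_graph G \<Longrightarrow> adj G i a \<Longrightarrow> walk G 1 i a"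
proof -
  assume a: "wf_graph G" "adj G i a"
  then have "i \<in> verts G" unfolding wf_graph_def by blast
  from walk_step[OF walk_0[OF this] a(2) a(1)] show ?thesis by simp
qed

lemma walk_2: "wf_graph G \<Longrightarrow> adj G i a \<Longrightarrow> adj G a b \<Longrightarrow> walk G 2 i b"
  using walk_step[OF walk_1, of G i a b] by (simp add: numeral_2_eq_2)

lemma walk_3: "wf_graph G \<Longrightarrow> adj G i a \<Longrightarrow> adj G a b \<Longrightarrow> adj G b c \<Longrightarrow> walk G 3 i c"
  using walk_step[OF walk_2, of G i a b c] by (simp add: numeral_3_eq_3 numeral_2_eq_2)

abbreviation "VV G i \<equiv> subV (EgoNet 3) G i"

lemma VV_sub: "VV G i \<subseteq> verts G" unfolding subV_def by auto

lemma VV_root: "i \<in> verts G \<Longrightarrow> i \<in> VV G i"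
proof -
  assume "i \<in> verts G"
  have h: "spd G i i \<le> enat 0" by (rule spd_le[OF walk_0[OF \<open>i \<in> verts G\<close>]])
  have "spd G i i \<le> enat 3" using order_trans[OF h, of "enat 3"] by simp
  then show ?thesis unfolding subV_def using \<open>i \<in> verts G\<close> by simp
qed

lemma VV_1: "wf_graph G \<Longrightarrow> adj G i a \<Longrightarrow> a \<in> VV G i"
proof -
  assume a: "wf_graph G" "adj G i a"
  have h: "spd G i a \<le> enat 1" by (rule spd_le[OF walk_1[OF a]])
  have "spd G i a \<le> enat 3" using order_trans[OF h, of "enat 3"] by simp
  then show ?thesis unfolding subV_def using a unfolding wf_graph_def by simp
qed

lemma VV_2: "wf_graph G \<Longrightarrow> adj G i a \<Longrightarrow> adj G a b \<Longrightarrow> b \<in> VV G i"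
proof -
  assume a: "wf_graph G" "adj G i a" "adj G a b"
  have h: "spd G i b \<le> enat 2" by (rule spd_le[OF walk_2[OF a]])
  have "spd G i b \<le> enat 3" using order_trans[OF h, of "enat 3"] by simp
  then show ?thesis unfolding subV_def using a unfolding wf_graph_def by simp
qed

lemma VV_3: "wf_graph G \<Longrightarrow> adj G i a \<Longrightarrow> adj G a b \<Longrightarrow> adj G b c \<Longrightarrow> c \<in> VV G i"
proof -
  assume a: "wf_graph G" "adj G i a" "adj G a b" "adj G b c"
  have h: "spd G i c \<le> enat 3" by (rule spd_le[OF walk_3[OF a]])
  then show ?thesis unfolding subV_def using a unfolding wf_graph_def by simp
qed



abbreviation "NB G x \<equiv> neighbours G x"

lemma wfD: assumes "wf_graph G"
  shows "finite (verts G)" "adj G u v \<Longrightarrow> u \<in> verts G" "adj G u v \<Longrightarrow> v \<in> verts G"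
    "adj G u v \<Longrightarrow> adj G v u" "\<not> adj G u u"
  using assms unfolding wf_graph_def by auto

lemma NB_sub: "wf_graph G \<Longrightarrow> NB G x \<subseteq> verts G"
  unfolding neighbours_def using wfD(3) by fast

lemma NB_fin: "wf_graph G \<Longrightarrow> finite (NB G x)"
  by (rule finite_subset[OF NB_sub wfD(1)])

lemma len3: "length vs = 3 \<longleftrightarrow> (\<exists>x y z. vs = [x,y,z])"
  by (auto simp: numeral_3_eq_3 length_Suc_conv)

lemma len4: "length vs = 4 \<longleftrightarrow> (\<exists>w x y z. vs = [w,x,y,z])"
  by (auto simp: numeral_eq_Suc length_Suc_conv)

lemma pe2: "path_edges 2 [x,y,z] = {{x,y},{y,z}}"
  unfolding path_edges_def by (simp add: numeral_2_eq_2 lessThan_Suc insert_commute)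

lemma pe3: "path_edges 3 [w,x,y,z] = {{w,x},{x,y},{y,z}}"
  unfolding path_edges_def by (simp add: numeral_3_eq_3 lessThan_Suc insert_commute)

lemma all2: "(\<forall>k<(2::nat). P k) \<longleftrightarrow> P 0 \<and> P 1"
  by (auto simp: numeral_2_eq_2 less_Suc_eq)

lemma all3: "(\<forall>k<(3::nat). P k) \<longleftrightarrow> P 0 \<and> P 1 \<and> P 2"
  by (auto simp: numeral_3_eq_3 numeral_2_eq_2 less_Suc_eq)

lemma all4: "(\<forall>k<(4::nat). P k) \<longleftrightarrow> P 0 \<and> P 1 \<and> P 2 \<and> P 3"
  by (auto simp: numeral_eq_Suc less_Suc_eq)

lemma isp2: "is_path G 2 vs \<longleftrightarrow> (\<exists>x y z. vs = [x,y,z] \<and> distinct [x,y,z] \<and> adj G x y \<and> adj G y z)"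
proof
  assume h: "is_path G 2 vs"
  have "length vs = 3" using h unfolding is_path_def by simp
  then obtain x y z where "vs = [x,y,z]" unfolding len3 by blast
  then show "\<exists>x y z. vs = [x,y,z] \<and> distinct [x,y,z] \<and> adj G x y \<and> adj G y z"
    using h unfolding is_path_def all2 by simp
next
  assume "\<exists>x y z. vs = [x,y,z] \<and> distinct [x,y,z] \<and> adj G x y \<and> adj G y z"
  then obtain x y z where "vs = [x,y,z]" "distinct [x,y,z]" "adj G x y" "adj G y z" by blast
  then show "is_path G 2 vs" unfolding is_path_def all2 by simp
qed

lemma isp3: "is_path G 3 vs \<longleftrightarrow> (\<exists>w x y z. vs = [w,x,y,z] \<and> distinct [w,x,y,z] \<and> adj G w x \<and> adj G x y \<and> adj G y z)"
proof
  assume h: "is_path G 3 vs"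
  have "length vs = 4" using h unfolding is_path_def by simp
  then obtain w x y z where "vs = [w,x,y,z]" unfolding len4 by blast
  then show "\<exists>w x y z. vs = [w,x,y,z] \<and> distinct [w,x,y,z] \<and> adj G w x \<and> adj G x y \<and> adj G y z"
    using h unfolding is_path_def all3 by (simp add: numeral_eq_Suc)
next
  assume "\<exists>w x y z. vs = [w,x,y,z] \<and> distinct [w,x,y,z] \<and> adj G w x \<and> adj G x y \<and> adj G y z"
  then obtain w x y z where "vs = [w,x,y,z]" "distinct [w,x,y,z]" "adj G w x" "adj G x y" "adj G y z" by blast
  then show "is_path G 3 vs" unfolding is_path_def all3 by (simp add: numeral_eq_Suc)
qed

lemma count_path2:
  assumes wf: "wf_graph G"
  shows "count (Path 2) G i = card (SIGMA a:NB G i. NB G a - {i})"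
proof -
  let ?g = "\<lambda>(a,b). {{i,a},{a,b}}"
  let ?D = "SIGMA a:NB G i. NB G a - {i}"
  have eq: "{path_edges 2 vs | vs. is_path G 2 vs \<and> hd vs = i} = ?g ` ?D"
  proof (rule set_eqI, rule iffI)
    fix E assume "E \<in> {path_edges 2 vs | vs. is_path G 2 vs \<and> hd vs = i}"
    then obtain vs where vs: "E = path_edges 2 vs" "is_path G 2 vs" "hd vs = i" by blast
    then obtain x y z where xyz: "vs = [x,y,z]" "distinct [x,y,z]" "adj G x y" "adj G y z"
      unfolding isp2 by blast
    have xi: "x = i" using vs(3) xyz(1) by simp
    have "(y,z) \<in> ?D" using xyz xi unfolding neighbours_def by auto
    moreover have "E = ?g (y,z)" using vs(1) xyz(1) xi pe2 by simp
    ultimately show "E \<in> ?g ` ?D" by (rule rev_image_eqI)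
  next
    fix E assume "E \<in> ?g ` ?D"
    then obtain a b where ab: "(a,b) \<in> ?D" "E = ?g (a,b)" by blast
    have E: "adj G i a" "adj G a b" "b \<noteq> i" using ab(1) unfolding neighbours_def by simp_all
    have "distinct [i,a,b]" using E wfD(5)[OF wf] by auto
    then have "is_path G 2 [i,a,b]" unfolding isp2 using E by blast
    moreover have "E = path_edges 2 [i,a,b]" using ab(2) by (simp add: pe2)
    ultimately show "E \<in> {path_edges 2 vs | vs. is_path G 2 vs \<and> hd vs = i}"
      unfolding mem_Collect_eq by (intro exI[of _ "[i,a,b]"]) simp
  qed
  have inj: "inj_on ?g ?D"
  proof (rule inj_onI)
    fix p q assume hp: "p \<in> ?D" "q \<in> ?D" "?g p = ?g q"
    obtain a b where p: "p = (a,b)" by (cases p)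
    obtain a' b' where q: "q = (a',b')" by (cases q)
    have h: "{{i, a}, {a, b}} = {{i, a'}, {a', b'}}" "(a,b) \<in> ?D" "(a',b') \<in> ?D"
      using hp p q by simp_all
    have irr: "\<And>u. \<not> adj G u u" using wfD(5)[OF wf] .
    have h2: "adj G i a" "adj G a b" "b \<noteq> i" "adj G i a'" "adj G a' b'" "b' \<noteq> i"
      using h(2,3) unfolding neighbours_def by simp_all
    have d: "i \<noteq> a" "a \<noteq> b" "i \<noteq> a'" "a' \<noteq> b'" "b \<noteq> i" "b' \<noteq> i"
      using h2 irr by metis+
    have "{i,a} \<in> {{i, a'}, {a', b'}}" by (subst h(1)[symmetric]) simp
    then have "{i,a} = {i,a'} \<or> {i,a} = {a',b'}" unfolding insert_iff empty_iff by simp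
    then have aa: "a = a'" using d by (metis doubleton_eq_iff)
    have "{a,b} \<in> {{i, a'}, {a', b'}}" by (subst h(1)[symmetric]) simp
    then have "{a,b} = {i,a'} \<or> {a,b} = {a',b'}" unfolding insert_iff empty_iff by simp
    then have "b = b'" using d aa by (metis doubleton_eq_iff)
    then show "p = q" using aa p q by simp
  qed
  have "count (Path 2) G i = card (?g ` ?D)" using eq by simp
  also have "\<dots> = card ?D" using inj by (rule card_image)
  finally show ?thesis .
qed

lemma count_path3:
  assumes wf: "wf_graph G"
  shows "count (Path 3) G i = card (SIGMA a:NB G i. SIGMA b:NB G a - {i}. NB G b - {a,i})"
proof -
  let ?g = "\<lambda>(a,b,c). {{i,a},{a,b},{b,c}}"
  let ?D = "SIGMA a:NB G i. SIGMA b:NB G a - {i}. NB G b - {a,i}"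
  have irr: "\<And>u. \<not> adj G u u" using wfD(5)[OF wf] .
  have eq: "{path_edges 3 vs | vs. is_path G 3 vs \<and> hd vs = i} = ?g ` ?D"
  proof (rule set_eqI, rule iffI)
    fix E assume "E \<in> {path_edges 3 vs | vs. is_path G 3 vs \<and> hd vs = i}"
    then obtain vs where vs: "E = path_edges 3 vs" "is_path G 3 vs" "hd vs = i" by blast
    then obtain w x y z where xyz: "vs = [w,x,y,z]" "distinct [w,x,y,z]" "adj G w x" "adj G x y" "adj G y z"
      unfolding isp3 by blast
    have wi: "w = i" using vs(3) xyz(1) by simp
    have "(x,y,z) \<in> ?D" using xyz wi unfolding neighbours_def by auto
    moreover have "E = ?g (x,y,z)" using vs(1) xyz(1) wi by (simp add: pe3)
    ultimately show "E \<in> ?g ` ?D" by (rule rev_image_eqI)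
  next
    fix E assume "E \<in> ?g ` ?D"
    then obtain a b c where ab: "(a,b,c) \<in> ?D" "E = ?g (a,b,c)" by blast
    have E: "adj G i a" "adj G a b" "b \<noteq> i" "adj G b c" "c \<noteq> a" "c \<noteq> i"
      using ab(1) unfolding neighbours_def by simp_all
    have "i \<noteq> a" "a \<noteq> b" "b \<noteq> c" using E irr by metis+
    then have "distinct [i,a,b,c]" using E by auto
    then have "is_path G 3 [i,a,b,c]" unfolding isp3 using E by blast
    moreover have "E = path_edges 3 [i,a,b,c]" using ab(2) by (simp add: pe3)
    ultimately show "E \<in> {path_edges 3 vs | vs. is_path G 3 vs \<and> hd vs = i}"
      unfolding mem_Collect_eq by (intro exI[of _ "[i,a,b,c]"]) simp
  qed
  have inj: "inj_on ?g ?D"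
  proof (rule inj_onI)
    fix p q assume hp: "p \<in> ?D" "q \<in> ?D" "?g p = ?g q"
    obtain a b c where p: "p = (a,b,c)" by (cases p) auto
    obtain a' b' c' where q: "q = (a',b',c')" by (cases q) auto
    have h: "{{i, a}, {a, b}, {b, c}} = {{i, a'}, {a', b'}, {b', c'}}" "(a,b,c) \<in> ?D" "(a',b',c') \<in> ?D"
      using hp p q by simp_all
    have h2: "adj G i a" "adj G a b" "b \<noteq> i" "adj G b c" "c \<noteq> a" "c \<noteq> i"
       "adj G i a'" "adj G a' b'" "b' \<noteq> i" "adj G b' c'" "c' \<noteq> a'" "c' \<noteq> i"
      using h(2,3) unfolding neighbours_def by simp_all
    have d: "i \<noteq> a" "a \<noteq> b" "b \<noteq> c" "i \<noteq> a'" "a' \<noteq> b'" "b' \<noteq> c'"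
      using h2 irr by metis+
    have "{i,a} \<in> {{i, a'}, {a', b'}, {b', c'}}" by (subst h(1)[symmetric]) simp
    then have "{i,a} = {i,a'} \<or> {i,a} = {a',b'} \<or> {i,a} = {b',c'}" unfolding insert_iff empty_iff by simp
    then have aa: "a = a'" using d h2 by (metis doubleton_eq_iff)
    have "{a,b} \<in> {{i, a'}, {a', b'}, {b', c'}}" by (subst h(1)[symmetric]) simp
    then have "{a,b} = {i,a'} \<or> {a,b} = {a',b'} \<or> {a,b} = {b',c'}" unfolding insert_iff empty_iff by simp
    then have bb: "b = b'" using d h2 aa by (metis doubleton_eq_iff)
    have "{b,c} \<in> {{i, a'}, {a', b'}, {b', c'}}" by (subst h(1)[symmetric]) simp
    then have "{b,c} = {i,a'} \<or> {b,c} = {a',b'} \<or> {b,c} = {b',c'}" unfolding insert_iff empty_iff by simp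
    then have "c = c'" using d h2 aa bb by (metis doubleton_eq_iff)
    then show "p = q" using aa bb p q by simp
  qed
  have "count (Path 3) G i = card (?g ` ?D)" using eq by simp
  also have "\<dots> = card ?D" using inj by (rule card_image)
  finally show ?thesis .
qed

lemma lt3: "{..<3::nat} = {0,1,2}" by auto
lemma lt4: "{..<4::nat} = {0,1,2,3}" by auto
lemma ce3: "cycle_edges 3 [x,y,z] = {{x,y},{y,z},{z,x}}"
  unfolding cycle_edges_def lt3 by simp
lemma ce4: "cycle_edges 4 [w,x,y,z] = {{w,x},{x,y},{y,z},{z,w}}"
  unfolding cycle_edges_def lt4 by simp

lemma isc3L: "is_cycle G 3 [x,y,z] \<longleftrightarrow> distinct [x,y,z] \<and> adj G x y \<and> adj G y z \<and> adj G z x"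
  unfolding is_cycle_def all3 by simp

lemma isc4L: "is_cycle G 4 [w,x,y,z] \<longleftrightarrow> distinct [w,x,y,z] \<and> adj G w x \<and> adj G x y \<and> adj G y z \<and> adj G z w"
  unfolding is_cycle_def all4 by simp

lemma isc3: "is_cycle G 3 vs \<Longrightarrow> \<exists>x y z. vs = [x,y,z] \<and> distinct [x,y,z] \<and> adj G x y \<and> adj G y z \<and> adj G z x"
proof -
  assume h: "is_cycle G 3 vs"
  have "length vs = 3" using h unfolding is_cycle_def by simp
  then obtain x y z where vs: "vs = [x,y,z]" unfolding len3 by blast
  then have "is_cycle G 3 [x,y,z]" using h by simp
  then show ?thesis unfolding isc3L using vs by blast
qed

lemma isc4: "is_cycle G 4 vs \<Longrightarrow> \<exists>w x y z. vs = [w,x,y,z] \<and> distinct [w,x,y,z] \<and> adj G w x \<and> adj G x y \<and> adj G y z \<and> adj G z w"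
proof -
  assume h: "is_cycle G 4 vs"
  have "length vs = 4" using h unfolding is_cycle_def by simp
  then obtain w x y z where vs: "vs = [w,x,y,z]" unfolding len4 by blast
  then have "is_cycle G 4 [w,x,y,z]" using h by simp
  then show ?thesis unfolding isc4L using vs by blast
qed



definition g3 :: "'v \<Rightarrow> 'v set \<Rightarrow> 'v set set" where
  "g3 i e = insert e ((\<lambda>x. {i,x}) ` e)"

definition T3 :: "('v, 'b) graph_scheme \<Rightarrow> 'v \<Rightarrow> 'v set set" where
  "T3 G i = {{a,b} | a b. adj G i a \<and> adj G i b \<and> adj G a b}"

lemma g3_pair: "g3 i {y,z} = {{i,y},{y,z},{z,i}}"
  unfolding g3_def by (simp add: insert_commute)

lemma tri_in:
  assumes wf: "wf_graph G" and h: "adj G i y" "adj G y z" "adj G z i"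
  shows "{{i,y},{y,z},{z,i}} \<in> g3 i ` T3 G i"
proof -
  have "adj G i z" using wfD(4)[OF wf h(3)] .
  then have "{y,z} \<in> T3 G i" unfolding T3_def using h by blast
  then show ?thesis using g3_pair[of i y z] by (metis image_eqI)
qed

lemma count_cycle3:
  assumes wf: "wf_graph G"
  shows "count (Cycle 3) G i = card (T3 G i)"
proof -
  have irr: "\<And>u. \<not> adj G u u" using wfD(5)[OF wf] .
  have sym: "\<And>u v. adj G u v \<Longrightarrow> adj G v u" using wfD(4)[OF wf] .
  have eq: "{cycle_edges 3 vs | vs. is_cycle G 3 vs \<and> i \<in> set vs} = g3 i ` T3 G i"
  proof (rule set_eqI, rule iffI)
    fix E assume "E \<in> {cycle_edges 3 vs | vs. is_cycle G 3 vs \<and> i \<in> set vs}"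
    then obtain vs where vs: "E = cycle_edges 3 vs" "is_cycle G 3 vs" "i \<in> set vs" by blast
    then obtain x y z where xyz: "vs = [x,y,z]" "adj G x y" "adj G y z" "adj G z x"
      using isc3 by blast
    have E: "E = {{x,y},{y,z},{z,x}}" using vs(1) xyz(1) by (simp add: ce3)
    have "i = x \<or> i = y \<or> i = z" using vs(3) xyz(1) by simp
    moreover
    { assume "i = x" then have "E \<in> g3 i ` T3 G i" using tri_in[OF wf, of i y z] xyz E by simp }
    moreover
    { assume "i = y"
      moreover have "E = {{y,z},{z,x},{x,y}}" using E by (simp add: insert_commute)
      ultimately have "E \<in> g3 i ` T3 G i" using tri_in[OF wf, of i z x] xyz by simp }
    moreover
    { assume "i = z"
      moreover have "E = {{z,x},{x,y},{y,z}}" using E by (simp add: insert_commute)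
      ultimately have "E \<in> g3 i ` T3 G i" using tri_in[OF wf, of i x y] xyz by simp }
    ultimately show "E \<in> g3 i ` T3 G i" by blast
  next
    fix E assume "E \<in> g3 i ` T3 G i"
    then obtain e where e: "e \<in> T3 G i" "E = g3 i e" by blast
    then obtain a b where ab: "e = {a,b}" "adj G i a" "adj G i b" "adj G a b"
      unfolding T3_def by blast
    have "i \<noteq> a" "i \<noteq> b" "a \<noteq> b" using ab irr by metis+
    then have "is_cycle G 3 [i,a,b]" unfolding isc3L using ab sym by simp
    moreover have "E = cycle_edges 3 [i,a,b]" using e(2) ab(1) by (simp add: ce3 g3_pair)
    ultimately show "E \<in> {cycle_edges 3 vs | vs. is_cycle G 3 vs \<and> i \<in> set vs}"
      unfolding mem_Collect_eq by (intro exI[of _ "[i,a,b]"]) simp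
  qed
  have noi: "i \<notin> e" if "e \<in> T3 G i" for e
    using that irr unfolding T3_def by blast
  have inj: "inj_on (g3 i) (T3 G i)"
  proof (rule inj_onI)
    fix e e' assume h: "e \<in> T3 G i" "e' \<in> T3 G i" "g3 i e = g3 i e'"
    have "e \<in> g3 i e" unfolding g3_def by simp
    then have "e \<in> g3 i e'" using h(3) by simp
    then have "e = e' \<or> e \<in> (\<lambda>x. {i,x}) ` e'" unfolding g3_def by simp
    moreover have "e \<notin> (\<lambda>x. {i,x}) ` e'" using noi[OF h(1)] by blast
    ultimately show "e = e'" by blast
  qed
  have "count (Cycle 3) G i = card (g3 i ` T3 G i)" using eq by simp
  also have "\<dots> = card (T3 G i)" using inj by (rule card_image)
  finally show ?thesis .
qed

lemma pair_fibre: "{(a,b). {a,b} = {x,y}} = {(x,y),(y,x)}"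
  by (auto simp: doubleton_eq_iff)

lemma T3_double:
  assumes wf: "wf_graph G"
  shows "card (SIGMA a:NB G i. NB G a \<inter> NB G i) = 2 * card (T3 G i)"
proof -
  have irr: "\<And>u. \<not> adj G u u" using wfD(5)[OF wf] .
  have sym: "\<And>u v. adj G u v \<Longrightarrow> adj G v u" using wfD(4)[OF wf] .
  let ?O = "SIGMA a:NB G i. NB G a \<inter> NB G i"
  let ?F = "\<lambda>e. {(a,b). {a,b} = e}"
  have O: "?O = \<Union> (?F ` T3 G i)"
  proof (rule set_eqI, rule iffI)
    fix p assume "p \<in> ?O"
    then obtain a b where p: "p = (a,b)" "adj G i a" "adj G a b" "adj G i b"
      unfolding neighbours_def by auto
    then have "{a,b} \<in> T3 G i" unfolding T3_def by blast
    then show "p \<in> \<Union> (?F ` T3 G i)" using p(1) by blast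
  next
    fix p assume "p \<in> \<Union> (?F ` T3 G i)"
    then obtain e where e: "e \<in> T3 G i" "p \<in> ?F e" by blast
    then obtain x y where xy: "e = {x,y}" "adj G i x" "adj G i y" "adj G x y"
      unfolding T3_def by blast
    have "p \<in> {(x,y),(y,x)}" using e(2) xy(1) pair_fibre[of x y] by simp
    then show "p \<in> ?O" using xy sym unfolding neighbours_def by auto
  qed
  have finO: "finite ?O" using NB_fin[OF wf] by auto
  have finT: "finite (T3 G i)"
  proof -
    have "T3 G i \<subseteq> (\<lambda>(a,b). {a,b}) ` ?O"
    proof
      fix e assume "e \<in> T3 G i"
      then obtain a b where ab: "e = {a,b}" "adj G i a" "adj G i b" "adj G a b"
        unfolding T3_def by blast
      then have "(a,b) \<in> ?O" unfolding neighbours_def by simp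
      then show "e \<in> (\<lambda>(a,b). {a,b}) ` ?O" using ab(1) by (auto intro: rev_image_eqI)
    qed
    then show ?thesis using finO finite_subset by blast
  qed
  have c2: "card (?F e) = 2" if "e \<in> T3 G i" for e
  proof -
    obtain x y where xy: "e = {x,y}" "adj G x y" using \<open>e \<in> T3 G i\<close> unfolding T3_def by blast
    have "x \<noteq> y" using xy(2) irr by metis
    then show ?thesis using xy(1) pair_fibre[of x y] by simp
  qed
  have "card ?O = card (\<Union> (?F ` T3 G i))" using O by simp
  also have "\<dots> = (\<Sum>e\<in>T3 G i. card (?F e))"
  proof (rule card_UN_disjoint[OF finT])
    show "\<forall>e\<in>T3 G i. finite (?F e)"
    proof
      fix e assume "e \<in> T3 G i"
      then obtain x y where "e = {x,y}" unfolding T3_def by blast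
      then show "finite (?F e)" using pair_fibre[of x y] by simp
    qed
    show "\<forall>e\<in>T3 G i. \<forall>e'\<in>T3 G i. e \<noteq> e' \<longrightarrow> ?F e \<inter> ?F e' = {}" by blast
  qed
  also have "\<dots> = (\<Sum>e\<in>T3 G i. 2)" using c2 by simp
  also have "\<dots> = 2 * card (T3 G i)" by simp
  finally show ?thesis .
qed



definition g4 :: "'v \<Rightarrow> 'v \<times> 'v set \<Rightarrow> 'v set set" where
  "g4 i p = (\<lambda>x. {i,x}) ` snd p \<union> (\<lambda>x. {fst p,x}) ` snd p"

definition T4 :: "('v, 'b) graph_scheme \<Rightarrow> 'v \<Rightarrow> ('v \<times> 'v set) set" where
  "T4 G i = (SIGMA b:verts G - {i}. {P. P \<subseteq> NB G b \<inter> NB G i \<and> card P = 2})"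

lemma g4_pair: "g4 i (b,{a,c}) = {{i,a},{a,b},{b,c},{c,i}}"
  unfolding g4_def by (simp add: insert_commute)

lemma sq_in:
  assumes wf: "wf_graph G" and h: "adj G i a" "adj G a b" "adj G b c" "adj G c i" "distinct [i,a,b,c]"
  shows "{{i,a},{a,b},{b,c},{c,i}} \<in> g4 i ` T4 G i"
proof -
  have s: "adj G i c" "adj G b a" using wfD(4)[OF wf] h by blast+
  have bv: "b \<in> verts G" using wfD(2)[OF wf h(3)] .
  have "{a,c} \<subseteq> NB G b \<inter> NB G i" using s h unfolding neighbours_def by simp
  moreover have "card {a,c} = 2" using h(5) by simp
  ultimately have "(b,{a,c}) \<in> T4 G i" unfolding T4_def using bv h(5) by auto
  then show ?thesis using g4_pair[of i b a c] by (metis image_eqI)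
qed

lemma count_cycle4_T4:
  assumes wf: "wf_graph G"
  shows "count (Cycle 4) G i = card (T4 G i)"
proof -
  have irr: "\<And>u. \<not> adj G u u" using wfD(5)[OF wf] .
  have sym: "\<And>u v. adj G u v \<Longrightarrow> adj G v u" using wfD(4)[OF wf] .
  have eq: "{cycle_edges 4 vs | vs. is_cycle G 4 vs \<and> i \<in> set vs} = g4 i ` T4 G i"
  proof (rule set_eqI, rule iffI)
    fix E assume "E \<in> {cycle_edges 4 vs | vs. is_cycle G 4 vs \<and> i \<in> set vs}"
    then obtain vs where vs: "E = cycle_edges 4 vs" "is_cycle G 4 vs" "i \<in> set vs" by blast
    then obtain w x y z where xyz: "vs = [w,x,y,z]" "distinct [w,x,y,z]" "adj G w x" "adj G x y" "adj G y z" "adj G z w"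
      using isc4 by blast
    have E: "E = {{w,x},{x,y},{y,z},{z,w}}" using vs(1) xyz(1) by (simp add: ce4)
    have "i = w \<or> i = x \<or> i = y \<or> i = z" using vs(3) xyz(1) by simp
    moreover
    { assume "i = w" then have "E \<in> g4 i ` T4 G i" using sq_in[OF wf, of i x y z] xyz E by simp }
    moreover
    { assume "i = x"
      moreover have "E = {{x,y},{y,z},{z,w},{w,x}}" using E by (simp add: insert_commute)
      moreover have "distinct [x,y,z,w]" using xyz(2) by auto
      ultimately have "E \<in> g4 i ` T4 G i" using sq_in[OF wf, of i y z w] xyz by simp }
    moreover
    { assume "i = y"
      moreover have "E = {{y,z},{z,w},{w,x},{x,y}}" using E by (simp add: insert_commute)
      moreover have "distinct [y,z,w,x]" using xyz(2) by auto
      ultimately have "E \<in> g4 i ` T4 G i" using sq_in[OF wf, of i z w x] xyz by simp }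
    moreover
    { assume "i = z"
      moreover have "E = {{z,w},{w,x},{x,y},{y,z}}" using E by (simp add: insert_commute)
      moreover have "distinct [z,w,x,y]" using xyz(2) by auto
      ultimately have "E \<in> g4 i ` T4 G i" using sq_in[OF wf, of i w x y] xyz by simp }
    ultimately show "E \<in> g4 i ` T4 G i" by blast
  next
    fix E assume "E \<in> g4 i ` T4 G i"
    then obtain p where p: "p \<in> T4 G i" "E = g4 i p" by blast
    obtain b P where bP: "p = (b,P)" by (cases p)
    have hb: "b \<in> verts G" "b \<noteq> i" "P \<subseteq> NB G b \<inter> NB G i" "card P = 2"
      using p(1) bP unfolding T4_def by auto
    then obtain a c where ac: "P = {a,c}" "a \<noteq> c" unfolding card_2_iff by blast
    have adj: "adj G b a" "adj G b c" "adj G i a" "adj G i c" using hb(3) ac(1) unfolding neighbours_def by auto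
    have "i \<noteq> a" "i \<noteq> c" "a \<noteq> b" "b \<noteq> c" using adj irr by metis+
    then have "is_cycle G 4 [i,a,b,c]" unfolding isc4L using adj sym ac(2) hb(2) by simp
    moreover have "E = cycle_edges 4 [i,a,b,c]" using p(2) bP ac(1) by (simp add: ce4 g4_pair)
    ultimately show "E \<in> {cycle_edges 4 vs | vs. is_cycle G 4 vs \<and> i \<in> set vs}"
      unfolding mem_Collect_eq by (intro exI[of _ "[i,a,b,c]"]) simp
  qed
  have memP: "{i,x} \<in> g4 i (b,P) \<longleftrightarrow> x \<in> P" if "(b,P) \<in> T4 G i" for b P x
  proof -
    have hb: "b \<noteq> i" "P \<subseteq> NB G b \<inter> NB G i" using that unfolding T4_def by auto
    have ni: "y \<noteq> i" if "y \<in> P" for y using hb(2) that irr unfolding neighbours_def by blast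
    show ?thesis
    proof
      assume "{i,x} \<in> g4 i (b,P)"
      then have "(\<exists>y\<in>P. {i,x} = {i,y}) \<or> (\<exists>y\<in>P. {i,x} = {b,y})" unfolding g4_def by auto
      then show "x \<in> P" using hb(1) ni by (metis doubleton_eq_iff)
    next
      assume "x \<in> P" then show "{i,x} \<in> g4 i (b,P)" unfolding g4_def by auto
    qed
  qed
  have unb: "\<Union>(g4 i (b,P)) - P - {i} = {b}" if "(b,P) \<in> T4 G i" for b P
  proof -
    have hb: "b \<noteq> i" "P \<subseteq> NB G b \<inter> NB G i" "card P = 2" using that unfolding T4_def by auto
    have bP: "b \<notin> P" using hb(2) irr unfolding neighbours_def by blast
    have ne: "P \<noteq> {}" using hb(3) by auto
    have "\<Union>(g4 i (b,P)) = insert i (insert b P)" using ne unfolding g4_def by auto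
    then show ?thesis using bP hb(1) by auto
  qed
  have inj: "inj_on (g4 i) (T4 G i)"
  proof (rule inj_onI)
    fix p q assume h: "p \<in> T4 G i" "q \<in> T4 G i" "g4 i p = g4 i q"
    obtain b P where p: "p = (b,P)" by (cases p)
    obtain b' P' where q: "q = (b',P')" by (cases q)
    have PP: "P = P'"
    proof (rule set_eqI)
      fix x
      have "x \<in> P \<longleftrightarrow> {i,x} \<in> g4 i (b,P)" using memP h(1) p by simp
      also have "\<dots> \<longleftrightarrow> {i,x} \<in> g4 i (b',P')" using h(3) p q by simp
      also have "\<dots> \<longleftrightarrow> x \<in> P'" using memP h(2) q by simp
      finally show "x \<in> P \<longleftrightarrow> x \<in> P'" .
    qed
    have "{b} = \<Union>(g4 i (b,P)) - P - {i}" using unb h(1) p by simp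
    also have "\<dots> = \<Union>(g4 i (b',P')) - P' - {i}" using h(3) p q PP by simp
    also have "\<dots> = {b'}" using unb h(2) q by simp
    finally show "p = q" using p q PP by simp
  qed
  have "count (Cycle 4) G i = card (g4 i ` T4 G i)" using eq by simp
  also have "\<dots> = card (T4 G i)" using inj by (rule card_image)
  finally show ?thesis .
qed

lemma count_cycle4:
  assumes wf: "wf_graph G"
  shows "count (Cycle 4) G i = (\<Sum>b\<in>verts G - {i}. card (NB G b \<inter> NB G i) choose 2)"
proof -
  have "card (T4 G i) = (\<Sum>b\<in>verts G - {i}. card {P. P \<subseteq> NB G b \<inter> NB G i \<and> card P = 2})"
    unfolding T4_def
  proof (rule card_SigmaI)
    show "finite (verts G - {i})" using wfD(1)[OF wf] by simp
    show "\<forall>a\<in>verts G - {i}. finite {P. P \<subseteq> NB G a \<inter> NB G i \<and> card P = 2}"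
      using NB_fin[OF wf] by auto
  qed
  also have "\<dots> = (\<Sum>b\<in>verts G - {i}. card (NB G b \<inter> NB G i) choose 2)"
  proof (rule sum.cong[OF refl])
    fix b
    have "finite (NB G b \<inter> NB G i)" using NB_fin[OF wf] by blast
    then show "card {P. P \<subseteq> NB G b \<inter> NB G i \<and> card P = 2} = card (NB G b \<inter> NB G i) choose 2"
      by (rule n_subsets)
  qed
  finally show ?thesis using count_cycle4_T4[OF wf] by simp
qed



definition msgf :: "nat \<Rightarrow> real list \<Rightarrow> real list \<Rightarrow> real list \<Rightarrow> (nat \<Rightarrow> real)" where
  "msgf t hj hk e = (if t = 0 then (\<lambda>n. if n = 0 then last hk else if n = Suc 0 then 1 else 0)
     else if t = Suc 0 then (\<lambda>n. if n = 0 then hk ! 1 else if n = Suc 0 then (1 - hk ! 0) * (hk ! 2 - 1 - hk ! 1) else 0)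
     else (\<lambda>n. 0))"

definition updf :: "nat \<Rightarrow> real list \<Rightarrow> (nat \<Rightarrow> real) \<Rightarrow> real list" where
  "updf t h m = (if t = 0 then [last h, m 0, m (Suc 0)] else [h ! 0, h ! 1, h ! 2, m 0, m (Suc 0)])"

definition net :: "(real list multiset \<Rightarrow> real list) \<Rightarrow> mpnn" where
  "net R = \<lparr>extr = EgoNet 3, lab = IdLabel, layers = 2, Msg = msgf, Upd = updf, Readout = R\<rparr>"

lemma valid_net: "valid_mpnn (net R)"
  unfolding valid_mpnn_def net_def
proof (simp, intro allI impI)
  fix t :: nat assume "t < 2"
  show "\<exists>d. \<forall>a b c k. d \<le> k \<longrightarrow> msgf t a b c k = 0"
    by (rule exI[of _ 2]) (auto simp: msgf_def)
qed

definition SS :: "('v, 'b) graph_scheme \<Rightarrow> 'v \<Rightarrow> 'v \<Rightarrow> 'v set" where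
  "SS G i j = {k. subAdj (EgoNet 3) G i j k}"

definition aa :: "('v, 'b) graph_scheme \<Rightarrow> 'v \<Rightarrow> 'v \<Rightarrow> real" where
  "aa G i j = (if i \<in> SS G i j then 1 else 0)"

definition dd :: "('v, 'b) graph_scheme \<Rightarrow> 'v \<Rightarrow> 'v \<Rightarrow> real" where
  "dd G i j = real (card (SS G i j))"

definition rr :: "'v \<Rightarrow> 'v \<Rightarrow> real" where
  "rr i j = (if i = j then 1 else 0)"

lemma SS_sub: "SS G i j \<subseteq> VV G i"
  unfolding SS_def subAdj_def by blast

lemma SS_fin: "wf_graph G \<Longrightarrow> finite (SS G i j)"
proof -
  assume wf: "wf_graph G"
  have "SS G i j \<subseteq> verts G" by (rule subset_trans[OF SS_sub VV_sub])
  then show ?thesis using wfD(1)[OF wf] finite_subset by blast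
qed

lemma hidden0: "hidden (net R) G i 0 j = nattr G j @ [rr i j]"
  by (simp add: net_def zlabel_def rr_def)

lemma hidden1:
  assumes wf: "wf_graph G"
  shows "hidden (net R) G i (Suc 0) j = [rr i j, aa G i j, dd G i j]"
proof -
  have "hidden (net R) G i (Suc 0) j = updf 0 (hidden (net R) G i 0 j)
      (\<Sum>k \<in> SS G i j. msgf 0 (hidden (net R) G i 0 j) (hidden (net R) G i 0 k) (eattr G j k))"
    by (simp add: net_def SS_def)
  also have "\<dots> = [rr i j, (\<Sum>k \<in> SS G i j. rr i k), (\<Sum>k \<in> SS G i j. 1)]"
    by (simp add: updf_def msgf_def sum_fun_apply net_def zlabel_def rr_def)
  also have "(\<Sum>k \<in> SS G i j. rr i k) = aa G i j"
    unfolding rr_def aa_def using SS_fin[OF wf] by simp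
  also have "(\<Sum>k \<in> SS G i j. (1::real)) = dd G i j"
    unfolding dd_def by simp
  finally show ?thesis .
qed

lemma hidden2:
  assumes wf: "wf_graph G"
  shows "hidden (net R) G i 2 j = [rr i j, aa G i j, dd G i j,
     (\<Sum>k \<in> SS G i j. aa G i k), (\<Sum>k \<in> SS G i j. (1 - rr i k) * (dd G i k - 1 - aa G i k))]"
proof -
  have "hidden (net R) G i 2 j = updf 1 (hidden (net R) G i 1 j)
      (\<Sum>k \<in> SS G i j. msgf 1 (hidden (net R) G i 1 j) (hidden (net R) G i 1 k) (eattr G j k))"
    by (simp add: net_def SS_def numeral_2_eq_2)
  also have "\<dots> = [rr i j, aa G i j, dd G i j,
     (\<Sum>k \<in> SS G i j. aa G i k), (\<Sum>k \<in> SS G i j. (1 - rr i k) * (dd G i k - 1 - aa G i k))]"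
    using hidden1[OF wf] by (simp add: updf_def msgf_def sum_fun_apply)
  finally show ?thesis .
qed

lemma node_rep_net:
  assumes wf: "wf_graph G"
  shows "node_rep (net (\<lambda>M. [sum_mset (image_mset f M)])) G i =
    [\<Sum>j\<in>VV G i. f [rr i j, aa G i j, dd G i j,
     (\<Sum>k \<in> SS G i j. aa G i k), (\<Sum>k \<in> SS G i j. (1 - rr i k) * (dd G i k - 1 - aa G i k))]]"
proof -
  have "node_rep (net (\<lambda>M. [sum_mset (image_mset f M)])) G i =
     [sum_mset (image_mset (f \<circ> hidden (net (\<lambda>M. [sum_mset (image_mset f M)])) G i 2) (mset_set (VV G i)))]"
    unfolding node_rep_def by (simp add: net_def multiset.map_comp)
  also have "\<dots> = [\<Sum>j\<in>VV G i. f (hidden (net (\<lambda>M. [sum_mset (image_mset f M)])) G i 2 j)]"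
    by (simp add: sum_unfold_sum_mset comp_def)
  finally show ?thesis using hidden2[OF wf] by simp
qed



context
  fixes G :: "('v, 'b) graph_scheme" and i :: 'v
  assumes wf: "wf_graph G" and iv: "i \<in> verts G"
begin

lemma irrE: "\<not> adj G u u" using wfD(5)[OF wf] .
lemma symE: "adj G u v \<Longrightarrow> adj G v u" using wfD(4)[OF wf] .

lemma VV_fin: "finite (VV G i)"
  by (rule finite_subset[OF VV_sub wfD(1)[OF wf]])

lemma SS_eq: "j \<in> VV G i \<Longrightarrow> SS G i j = NB G j \<inter> VV G i"
  unfolding SS_def subAdj_def neighbours_def by auto

lemma SS_root: "j \<in> VV G i \<Longrightarrow> i \<in> SS G i j \<longleftrightarrow> adj G i j"
  using SS_eq VV_root[OF iv] symE unfolding neighbours_def by blast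

lemma aa_eq: "j \<in> VV G i \<Longrightarrow> aa G i j = (if adj G i j then 1 else 0)"
  unfolding aa_def using SS_root by simp

lemma SS_full: "j \<in> VV G i \<Longrightarrow> NB G j \<subseteq> VV G i \<Longrightarrow> SS G i j = NB G j"
  using SS_eq by blast

lemma SS_1: "adj G i a \<Longrightarrow> SS G i a = NB G a"
  using SS_full VV_1[OF wf] VV_2[OF wf] unfolding neighbours_def by blast

lemma SS_2: "adj G i a \<Longrightarrow> adj G a b \<Longrightarrow> SS G i b = NB G b"
  using SS_full VV_2[OF wf] VV_3[OF wf] unfolding neighbours_def by blast

lemma SS_cap: "j \<in> VV G i \<Longrightarrow> {k \<in> SS G i j. adj G i k} = NB G j \<inter> NB G i"
  using SS_eq VV_1[OF wf] symE unfolding neighbours_def by blast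

lemma sum_VV_adj: "(\<Sum>j\<in>VV G i. if adj G i j then f j else 0) = (\<Sum>a\<in>NB G i. f a)"
proof -
  have "{j \<in> VV G i. adj G i j} = NB G i" using VV_1[OF wf] unfolding neighbours_def by blast
  then show ?thesis using sum.inter_filter[OF VV_fin, of f "adj G i"] by simp
qed

definition fP2 :: "real list \<Rightarrow> real" where
  "fP2 x = (if x ! 1 = 1 then x ! 2 - 1 else 0)"

lemma P2_rep: "node_rep (net (\<lambda>M. [sum_mset (image_mset fP2 M)])) G i = [real (count (Path 2) G i)]"
proof -
  have "node_rep (net (\<lambda>M. [sum_mset (image_mset fP2 M)])) G i = [\<Sum>j\<in>VV G i. if adj G i j then dd G i j - 1 else 0]"
    unfolding node_rep_net[OF wf] fP2_def by (intro arg_cong[where f="\<lambda>x. [x]"] sum.cong refl) (simp add: aa_eq)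
  also have "(\<Sum>j\<in>VV G i. if adj G i j then dd G i j - 1 else 0) = (\<Sum>a\<in>NB G i. dd G i a - 1)"
    by (rule sum_VV_adj)
  also have "\<dots> = (\<Sum>a\<in>NB G i. real (card (NB G a - {i})))"
  proof (rule sum.cong[OF refl])
    fix a assume "a \<in> NB G i"
    then have a: "adj G i a" unfolding neighbours_def by simp
    then have ia: "i \<in> NB G a" using symE unfolding neighbours_def by simp
    have "card (NB G a) \<ge> 1" using ia NB_fin[OF wf] by (metis One_nat_def Suc_leI card_gt_0_iff empty_iff)
    then show "dd G i a - 1 = real (card (NB G a - {i}))"
      unfolding dd_def SS_1[OF a] using ia by (simp add: of_nat_diff)
  qed
  also have "\<dots> = real (card (SIGMA a:NB G i. NB G a - {i}))"
    using NB_fin[OF wf] by (simp add: card_SigmaI)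
  finally show ?thesis using count_path2[OF wf] by simp
qed

lemma sum_ind: "finite A \<Longrightarrow> (\<Sum>k\<in>A. if P k then 1 else 0) = real (card {k\<in>A. P k})"
  by (simp add: sum.inter_filter[symmetric])

lemma cnt_aa: "j \<in> VV G i \<Longrightarrow> (\<Sum>k\<in>SS G i j. aa G i k) = real (card (NB G j \<inter> NB G i))"
proof -
  assume j: "j \<in> VV G i"
  have "(\<Sum>k\<in>SS G i j. aa G i k) = (\<Sum>k\<in>SS G i j. if adj G i k then 1 else 0)"
    using SS_sub[of G i j] aa_eq by (intro sum.cong refl) blast
  also have "\<dots> = real (card {k\<in>SS G i j. adj G i k})" using SS_fin[OF wf] by (rule sum_ind)
  finally show ?thesis using SS_cap[OF j] by simp
qed

definition fC3 :: "real list \<Rightarrow> real" where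
  "fC3 x = (if x ! 1 = 1 then x ! 3 / 2 else 0)"

lemma C3_rep: "node_rep (net (\<lambda>M. [sum_mset (image_mset fC3 M)])) G i = [real (count (Cycle 3) G i)]"
proof -
  have "node_rep (net (\<lambda>M. [sum_mset (image_mset fC3 M)])) G i =
      [\<Sum>j\<in>VV G i. if adj G i j then real (card (NB G j \<inter> NB G i)) / 2 else 0]"
    unfolding node_rep_net[OF wf] fC3_def by (intro arg_cong[where f="\<lambda>x. [x]"] sum.cong refl) (simp add: aa_eq cnt_aa)
  also have "(\<Sum>j\<in>VV G i. if adj G i j then real (card (NB G j \<inter> NB G i)) / 2 else 0)
      = (\<Sum>a\<in>NB G i. real (card (NB G a \<inter> NB G i)) / 2)"
    by (rule sum_VV_adj)
  also have "\<dots> = real (card (SIGMA a:NB G i. NB G a \<inter> NB G i)) / 2"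
    using NB_fin[OF wf] by (simp add: card_SigmaI sum_divide_distrib)
  also have "\<dots> = real (card (T3 G i))" using T3_double[OF wf, of i] by simp
  finally show ?thesis using count_cycle3[OF wf] by simp
qed

lemma real_choose2: "real (n choose 2) = real n * (real n - 1) / 2"
proof (induction n)
  case 0 then show ?case by simp
next
  case (Suc n)
  have "Suc n choose 2 = n + (n choose 2)" by (simp add: numeral_2_eq_2)
  then show ?case using Suc.IH by (simp add: field_simps)
qed

definition fC4 :: "real list \<Rightarrow> real" where
  "fC4 x = (if x ! 0 = 0 then x ! 3 * (x ! 3 - 1) / 2 else 0)"

lemma C4_rep: "node_rep (net (\<lambda>M. [sum_mset (image_mset fC4 M)])) G i = [real (count (Cycle 4) G i)]"
proof -
  let ?m = "\<lambda>j. real (card (NB G j \<inter> NB G i))"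
  have "node_rep (net (\<lambda>M. [sum_mset (image_mset fC4 M)])) G i =
      [\<Sum>j\<in>VV G i. if j \<noteq> i then ?m j * (?m j - 1) / 2 else 0]"
    unfolding node_rep_net[OF wf] fC4_def by (intro arg_cong[where f="\<lambda>x. [x]"] sum.cong refl) (auto simp: rr_def cnt_aa)
  also have "(\<Sum>j\<in>VV G i. if j \<noteq> i then ?m j * (?m j - 1) / 2 else 0) = (\<Sum>j\<in>VV G i - {i}. ?m j * (?m j - 1) / 2)"
  proof -
    have "{j \<in> VV G i. j \<noteq> i} = VV G i - {i}" by blast
    then show ?thesis using sum.inter_filter[OF VV_fin, of "\<lambda>j. ?m j * (?m j - 1) / 2" "\<lambda>j. j \<noteq> i"] by simp
  qed
  also have "\<dots> = (\<Sum>j\<in>VV G i - {i}. real (card (NB G j \<inter> NB G i) choose 2))"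
    by (simp add: real_choose2)
  also have "\<dots> = (\<Sum>j\<in>verts G - {i}. real (card (NB G j \<inter> NB G i) choose 2))"
  proof (rule sum.mono_neutral_left)
    show "finite (verts G - {i})" using wfD(1)[OF wf] by simp
    show "VV G i - {i} \<subseteq> verts G - {i}" using VV_sub[of G i] by blast
    show "\<forall>j\<in>verts G - {i} - (VV G i - {i}). real (card (NB G j \<inter> NB G i) choose 2) = 0"
    proof
      fix j assume j: "j \<in> verts G - {i} - (VV G i - {i})"
      have "NB G j \<inter> NB G i = {}"
      proof (rule ccontr)
        assume "NB G j \<inter> NB G i \<noteq> {}"
        then obtain a where "adj G j a" "adj G i a" unfolding neighbours_def by blast
        then have "j \<in> VV G i" using VV_2[OF wf] symE by blast
        then show False using j by blast
      qed
      then show "real (card (NB G j \<inter> NB G i) choose 2) = 0" by simp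
    qed
  qed
  also have "\<dots> = real (count (Cycle 4) G i)" using count_cycle4[OF wf, of i] by simp
  finally show ?thesis .
qed

lemma card_NB_minus:
  assumes a: "adj G i a" and b: "adj G a b" and bi: "b \<noteq> i"
  shows "real (card (NB G b - {a,i})) = real (card (NB G b)) - 1 - (if adj G i b then 1 else 0)"
proof -
  have aN: "a \<in> NB G b" using symE[OF b] unfolding neighbours_def by simp
  have ai: "a \<noteq> i" using a irrE by metis
  have fin: "finite (NB G b)" using NB_fin[OF wf] .
  show ?thesis
  proof (cases "adj G i b")
    case True
    then have iN: "i \<in> NB G b" using symE unfolding neighbours_def by simp
    have sub: "{a,i} \<subseteq> NB G b" using aN iN by simp
    have c2: "card {a,i} = 2" using ai by simp
    have "card (NB G b) \<ge> 2" using card_mono[OF fin sub] c2 by simp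
    moreover have "card (NB G b - {a,i}) = card (NB G b) - 2" using card_Diff_subset[OF _ sub] c2 by simp
    ultimately show ?thesis using True by (simp add: of_nat_diff)
  next
    case False
    then have iN: "i \<notin> NB G b" using symE unfolding neighbours_def by blast
    then have eq: "NB G b - {a,i} = NB G b - {a}" by blast
    have "card (NB G b) \<ge> 1" using aN fin by (metis One_nat_def Suc_leI card_gt_0_iff empty_iff)
    moreover have "card (NB G b - {a}) = card (NB G b) - 1" using aN by simp
    ultimately show ?thesis using False eq by (simp add: of_nat_diff)
  qed
qed

definition fP3 :: "real list \<Rightarrow> real" where
  "fP3 x = (if x ! 1 = 1 then x ! 4 else 0)"

lemma P3_rep: "node_rep (net (\<lambda>M. [sum_mset (image_mset fP3 M)])) G i = [real (count (Path 3) G i)]"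
proof -
  let ?t = "\<lambda>j. (\<Sum>k\<in>SS G i j. (1 - rr i k) * (dd G i k - 1 - aa G i k))"
  have "node_rep (net (\<lambda>M. [sum_mset (image_mset fP3 M)])) G i =
      [\<Sum>j\<in>VV G i. if adj G i j then ?t j else 0]"
    unfolding node_rep_net[OF wf] fP3_def by (intro arg_cong[where f="\<lambda>x. [x]"] sum.cong refl) (simp add: aa_eq)
  also have "(\<Sum>j\<in>VV G i. if adj G i j then ?t j else 0) = (\<Sum>a\<in>NB G i. ?t a)"
    by (rule sum_VV_adj)
  also have "\<dots> = (\<Sum>a\<in>NB G i. \<Sum>b\<in>NB G a - {i}. real (card (NB G b - {a,i})))"
  proof (rule sum.cong[OF refl])
    fix a assume "a \<in> NB G i"
    then have a: "adj G i a" unfolding neighbours_def by simp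
    have "?t a = (\<Sum>k\<in>NB G a. if k \<noteq> i then real (card (NB G k - {a,i})) else 0)"
    proof (unfold SS_1[OF a], rule sum.cong[OF refl])
      fix k assume "k \<in> NB G a"
      then have k: "adj G a k" unfolding neighbours_def by simp
      show "(1 - rr i k) * (dd G i k - 1 - aa G i k) = (if k \<noteq> i then real (card (NB G k - {a,i})) else 0)"
      proof (cases "k = i")
        case True then show ?thesis by (simp add: rr_def)
      next
        case False
        have kV: "k \<in> VV G i" using VV_2[OF wf a k] .
        have "dd G i k - 1 - aa G i k = real (card (NB G k)) - 1 - (if adj G i k then 1 else 0)"
          unfolding dd_def SS_2[OF a k] aa_eq[OF kV] by simp
        then show ?thesis using False card_NB_minus[OF a k False] by (simp add: rr_def)
      qed
    qed
    also have "\<dots> = (\<Sum>b\<in>NB G a - {i}. real (card (NB G b - {a,i})))"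
    proof -
      have "{k \<in> NB G a. k \<noteq> i} = NB G a - {i}" by blast
      then show ?thesis using sum.inter_filter[OF NB_fin[OF wf, of a], of "\<lambda>b. real (card (NB G b - {a,i}))" "\<lambda>k. k \<noteq> i"] by simp
    qed
    finally show "?t a = (\<Sum>b\<in>NB G a - {i}. real (card (NB G b - {a,i})))" .
  qed
  also have "\<dots> = real (card (SIGMA a:NB G i. SIGMA b:NB G a - {i}. NB G b - {a,i}))"
  proof -
    have fin: "finite (NB G x)" for x using NB_fin[OF wf] .
    have "card (SIGMA a:NB G i. SIGMA b:NB G a - {i}. NB G b - {a,i}) =
        (\<Sum>a\<in>NB G i. card (SIGMA b:NB G a - {i}. NB G b - {a,i}))"
      using fin by (intro card_SigmaI) auto
    also have "\<dots> = (\<Sum>a\<in>NB G i. \<Sum>b\<in>NB G a - {i}. card (NB G b - {a,i}))"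
      using fin by (intro sum.cong refl card_SigmaI) auto
    finally show ?thesis by simp
  qed
  finally show ?thesis using count_path3[OF wf, of i] by simp
qed

end

lemma can_count_all:
  assumes "S \<in> {Cycle 3, Cycle 4, Path 2, Path 3}"
  shows "can_count_node_level TYPE('v) S"
  unfolding can_count_node_level_def
proof (intro allI impI)
  fix G1 G2 :: "'v graph" and i1 i2
  assume wf1: "wf_graph G1" and wf2: "wf_graph G2" and i1: "i1 \<in> verts G1" and i2: "i2 \<in> verts G2"
    and ne: "count S G1 i1 \<noteq> count S G2 i2"
  have "S = Cycle 3 \<or> S = Cycle 4 \<or> S = Path 2 \<or> S = Path 3" using assms by simp
  then obtain f where f: "\<And>(G :: 'v graph) i. wf_graph G \<Longrightarrow> i \<in> verts G \<Longrightarrow>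
      node_rep (net (\<lambda>M. [sum_mset (image_mset f M)])) G i = [real (count S G i)]"
    using C3_rep C4_rep P2_rep P3_rep by blast
  have "node_rep (net (\<lambda>M. [sum_mset (image_mset f M)])) G1 i1 \<noteq> node_rep (net (\<lambda>M. [sum_mset (image_mset f M)])) G2 i2"
    using f[OF wf1 i1] f[OF wf2 i2] ne by simp
  then show "\<exists>N. valid_mpnn N \<and> node_rep N G1 i1 \<noteq> node_rep N G2 i2"
    using valid_net by blast
qed

theorem theorem1:
  shows "\<forall>S \<in> {Cycle 3, Cycle 4, Path 2, Path 3}. can_count_node_level TYPE('v) S"
  using can_count_all by blast


end
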